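(* Let $g:\{0,1\}^n\to\{0,1\}$ be odd, and for $k\ge 3$ let $G_k=g^{\otimes\binom k2}$ denote the GSWF on $n$ voters and $k$ alternatives with $G_k^{a,b}(x)=g(x^{a,b})$ for all $a\ne b$. Then \[ GCW(G_4)=2\,GCW(G_3)-1, \] and \[ GCW(G_5)=\frac{GCW(G_6)}{3}+\frac{5\,GCW(G_3)}{3}-1. \]
   Context: $g$ odd means $g(1-y_1,\dots,1-y_n)=1-g(y)$. Profiles $x\in(L_k)^n$ are uniform random, $L_k$ the linear orders on $k$ alternatives; $x^{a,b}_i=1$ iff voter $i$ ranks $a$ above $b$. An alternative $a$ is a generalized Condorcet winner (GCW) of $G_k$ at $x$ if $G_k^{a,b}(x)=1$ for all $b\ne a$; $GCW(G_k)=\Pr_x[G_k$ has a GCW at $x]$. *)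

theory Defs
  imports "HOL-Combinatorics.Permutations" Complex_Main
begin

text \<open>Boolean functions g on {0,1}^n are functions on bool lists of length n
  (True = 1).  g is odd if g(1-y) = 1 - g(y) for all y in {0,1}^n.\<close>
definition odd_bool_fun :: "nat \<Rightarrow> (bool list \<Rightarrow> bool) \<Rightarrow> bool" where
  "odd_bool_fun n g \<longleftrightarrow> (\<forall>y. length y = n \<longrightarrow> g (map Not y) = (\<not> g y))"

text \<open>Linear orders on the k alternatives {0..<k}, encoded as rank bijections p:
  alternative a is ranked above b iff p a < p b.\<close>
definition linorders :: "nat \<Rightarrow> (nat \<Rightarrow> nat) set" where
  "linorders k = {p. p permutes {..<k}}"

definition profiles :: "nat \<Rightarrow> nat \<Rightarrow> (nat \<Rightarrow> nat) list set" where
  "profiles n k = {xs. length xs = n \<and> set xs \<subseteq> linorders k}"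

definition pref :: "(nat \<Rightarrow> nat) list \<Rightarrow> nat \<Rightarrow> nat \<Rightarrow> bool list" where
  "pref xs a b = map (\<lambda>p. p a < p b) xs"

text \<open>G_k = g^{(k choose 2)}: G_k^{a,b}(x) = g(x^{a,b}); a is a generalized Condorcet
  winner at x if G_k^{a,b}(x) = 1 for all b \<noteq> a.\<close>
definition has_GCW :: "(bool list \<Rightarrow> bool) \<Rightarrow> nat \<Rightarrow> (nat \<Rightarrow> nat) list \<Rightarrow> bool" where
  "has_GCW g k xs \<longleftrightarrow> (\<exists>a<k. \<forall>b<k. b \<noteq> a \<longrightarrow> g (pref xs a b))"

definition GCW :: "(bool list \<Rightarrow> bool) \<Rightarrow> nat \<Rightarrow> nat \<Rightarrow> real" where
  "GCW g n k = real (card {xs \<in> profiles n k. has_GCW g k xs}) / real (card (profiles n k))"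

end

theory Submission
  imports Defs
begin


definition sg :: "(bool list \<Rightarrow> bool) \<Rightarrow> bool list \<Rightarrow> real" where
  "sg g v = (if g v then 1 else -1)"

definition Msum :: "(bool list \<Rightarrow> bool) \<Rightarrow> nat \<Rightarrow> nat \<Rightarrow> nat \<Rightarrow> nat set \<Rightarrow> real" where
  "Msum g n k a T = (\<Sum>xs\<in>profiles n k. \<Prod>b\<in>T. sg g (pref xs a b))"

definition M :: "(bool list \<Rightarrow> bool) \<Rightarrow> nat \<Rightarrow> nat \<Rightarrow> nat \<Rightarrow> nat set \<Rightarrow> real" where
  "M g n k a T = Msum g n k a T / real (card (profiles n k))"

lemma finite_linorders: "finite (linorders k)"
  unfolding linorders_def by (simp add: finite_permutations)

lemma profiles_finite: "finite (profiles n k)"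
proof -
  have "profiles n k = {xs. set xs \<subseteq> linorders k \<and> length xs = n}"
    unfolding profiles_def by auto
  then show ?thesis using finite_lists_length_eq[OF finite_linorders] by simp
qed

lemma profiles_card_pos: "card (profiles n k) > 0"
proof -
  have "replicate n id \<in> profiles n k"
    unfolding profiles_def linorders_def by (auto simp: permutes_id)
  then show ?thesis using profiles_finite card_gt_0_iff by blast
qed

lemma profiles_perm: "xs \<in> profiles n k \<Longrightarrow> p \<in> set xs \<Longrightarrow> p permutes {..<k}"
  unfolding profiles_def linorders_def by auto

lemma length_pref[simp]: "length (pref xs a b) = length xs"
  unfolding pref_def by simp

lemma profiles_length: "xs \<in> profiles n k \<Longrightarrow> length xs = n"
  unfolding profiles_def by auto

lemma sum_relabel:
  assumes "\<sigma> permutes {..<k}"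
  shows "(\<Sum>xs\<in>profiles n k. F (map (\<lambda>p. p \<circ> \<sigma>) xs)) = (\<Sum>xs\<in>profiles n k. (F xs :: real))"
proof (rule sum.reindex_bij_witness[where i = "map (\<lambda>p. p \<circ> inv \<sigma>)" and j = "map (\<lambda>p. p \<circ> \<sigma>)"])
  have i1: "\<sigma> \<circ> inv \<sigma> = id" "inv \<sigma> \<circ> \<sigma> = id"
    using permutes_inv_o[OF assms] by auto
  show "\<And>a. a \<in> profiles n k \<Longrightarrow> map (\<lambda>p. p \<circ> inv \<sigma>) (map (\<lambda>p. p \<circ> \<sigma>) a) = a"
    by (simp add: o_def permutes_inverses[OF assms])
  show "\<And>a. a \<in> profiles n k \<Longrightarrow> map (\<lambda>p. p \<circ> \<sigma>) (map (\<lambda>p. p \<circ> inv \<sigma>) a) = a"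
    by (simp add: o_def permutes_inverses[OF assms])
  show "\<And>a. a \<in> profiles n k \<Longrightarrow> map (\<lambda>p. p \<circ> \<sigma>) a \<in> profiles n k"
    unfolding profiles_def linorders_def using permutes_compose[OF assms] by auto
  show "\<And>a. a \<in> profiles n k \<Longrightarrow> map (\<lambda>p. p \<circ> inv \<sigma>) a \<in> profiles n k"
    unfolding profiles_def linorders_def using permutes_compose[OF permutes_inv[OF assms]] by auto
qed simp

lemma pref_relabel: "pref (map (\<lambda>p. p \<circ> \<sigma>) xs) a b = pref xs (\<sigma> a) (\<sigma> b)"
  unfolding pref_def by simp

lemma exists_perm_map:
  assumes S: "finite S" and a: "a \<in> S" and a': "a' \<in> S" and T: "T \<subseteq> S - {a}" and T': "T' \<subseteq> S - {a'}"
    and c: "card T = card T'"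
  shows "\<exists>\<sigma>. \<sigma> permutes S \<and> \<sigma> a' = a \<and> \<sigma> ` T' = T"
proof -
  have fT: "finite T" "finite T'" using S T T' finite_subset by blast+
  obtain f where f: "bij_betw f T' T" using finite_same_card_bij[OF fT(2) fT(1)] c by metis
  have "card (S - {a} - T) = card (S - {a'} - T')"
    using S T T' a a' c fT by (simp add: card_Diff_subset)
  then obtain h where h: "bij_betw h (S - {a'} - T') (S - {a} - T)"
    using finite_same_card_bij[of "S - {a'} - T'" "S - {a} - T"] S by (metis finite_Diff)
  define \<sigma> where "\<sigma> x = (if x = a' then a else if x \<in> T' then f x else if x \<in> S then h x else x)" for x
  have b1: "bij_betw \<sigma> {a'} {a}" unfolding \<sigma>_def bij_betw_def by auto
  have b2: "bij_betw \<sigma> T' T"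
    by (rule bij_betw_cong[THEN iffD1, OF _ f]) (use T' in \<open>auto simp: \<sigma>_def\<close>)
  have b3: "bij_betw \<sigma> (S - {a'} - T') (S - {a} - T)"
    by (rule bij_betw_cong[THEN iffD1, OF _ h]) (auto simp: \<sigma>_def)
  have "bij_betw \<sigma> ({a'} \<union> T' \<union> (S - {a'} - T')) ({a} \<union> T \<union> (S - {a} - T))"
    by (rule bij_betw_combine[OF bij_betw_combine[OF b1 b2] b3]) (use T in auto)
  moreover have "{a'} \<union> T' \<union> (S - {a'} - T') = S" "{a} \<union> T \<union> (S - {a} - T) = S"
    using a a' T T' by auto
  ultimately have "bij_betw \<sigma> S S" by simp
  moreover have "\<And>x. x \<notin> S \<Longrightarrow> \<sigma> x = x" unfolding \<sigma>_def using a' T' by auto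
  ultimately have "\<sigma> permutes S" by (rule bij_imp_permutes)
  moreover have "\<sigma> a' = a" unfolding \<sigma>_def by simp
  moreover have "\<sigma> ` T' = T"
  proof -
    have "\<sigma> ` T' = f ` T'" unfolding \<sigma>_def using T' by (auto intro!: image_cong)
    then show ?thesis using f unfolding bij_betw_def by simp
  qed
  ultimately show ?thesis by blast
qed

lemma M_sym:
  assumes "a < k" "a' < k" "T \<subseteq> {..<k} - {a}" "T' \<subseteq> {..<k} - {a'}" "card T = card T'"
  shows "M g n k a T = M g n k a' T'"
proof -
  obtain \<sigma> where s: "\<sigma> permutes {..<k}" "\<sigma> a' = a" "\<sigma> ` T' = T"
    using exists_perm_map[of "{..<k}" a a' T T'] assms by auto
  have "Msum g n k a' T' = (\<Sum>xs\<in>profiles n k. \<Prod>b\<in>T'. sg g (pref (map (\<lambda>p. p \<circ> \<sigma>) xs) a' b))"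
    unfolding Msum_def by (rule sum_relabel[OF s(1), symmetric])
  also have "\<dots> = (\<Sum>xs\<in>profiles n k. \<Prod>b\<in>T'. sg g (pref xs a (\<sigma> b)))"
    by (simp add: pref_relabel s(2))
  also have "\<dots> = Msum g n k a T"
    unfolding Msum_def s(3)[symmetric]
    by (rule sum.cong[OF refl]) (simp add: prod.reindex[OF permutes_inj_on[OF s(1)]] o_def)
  finally show ?thesis unfolding M_def by simp
qed


definition rv :: "nat \<Rightarrow> nat \<Rightarrow> nat" where
  "rv k y = (if y < k then k - 1 - y else y)"

lemma rv_rv[simp]: "rv k (rv k y) = y"
  by (auto simp: rv_def)

lemma rv_permutes: "rv k permutes {..<k}"
proof (rule bij_imp_permutes)
  show "bij_betw (rv k) {..<k} {..<k}"
    by (rule bij_betw_byWitness[where f' = "rv k"]) (auto simp: rv_def)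
  show "\<And>x. x \<notin> {..<k} \<Longrightarrow> rv k x = x" by (auto simp: rv_def)
qed

lemma sum_flip:
  "(\<Sum>xs\<in>profiles n k. F (map (\<lambda>p. rv k \<circ> p) xs)) = (\<Sum>xs\<in>profiles n k. (F xs :: real))"
proof (rule sum.reindex_bij_witness[where i = "map (\<lambda>p. rv k \<circ> p)" and j = "map (\<lambda>p. rv k \<circ> p)"])
  show "\<And>a. a \<in> profiles n k \<Longrightarrow> map (\<lambda>p. rv k \<circ> p) (map (\<lambda>p. rv k \<circ> p) a) = a"
    by (simp add: o_def)
  show "\<And>a. a \<in> profiles n k \<Longrightarrow> map (\<lambda>p. rv k \<circ> p) a \<in> profiles n k"
    unfolding profiles_def linorders_def using permutes_compose[OF _ rv_permutes] by auto
  then show "\<And>a. a \<in> profiles n k \<Longrightarrow> map (\<lambda>p. rv k \<circ> p) a \<in> profiles n k" .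
  show "\<And>a. a \<in> profiles n k \<Longrightarrow> map (\<lambda>p. rv k \<circ> p) (map (\<lambda>p. rv k \<circ> p) a) = a"
    by (simp add: o_def)
qed simp

lemma pref_flip:
  assumes "xs \<in> profiles n k" "a < k" "b < k" "a \<noteq> b"
  shows "pref (map (\<lambda>p. rv k \<circ> p) xs) a b = map Not (pref xs a b)"
  unfolding pref_def map_map o_def
proof (rule map_cong[OF refl])
  fix p assume "p \<in> set xs"
  then have p: "p permutes {..<k}" using profiles_perm assms(1) by blast
  have "p a < k" "p b < k" using permutes_in_image[OF p] assms by auto
  moreover have "p a \<noteq> p b" using permutes_inj[OF p] assms(4) by (auto dest: injD)
  ultimately show "(rv k (p a) < rv k (p b)) = (\<not> p a < p b)" by (auto simp: rv_def)
qed

lemma sg_not: "odd_bool_fun n g \<Longrightarrow> length v = n \<Longrightarrow> sg g (map Not v) = - sg g v"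
  unfolding odd_bool_fun_def sg_def by auto

lemma Msum_odd:
  assumes odd: "odd_bool_fun n g" and a: "a < k" and T: "T \<subseteq> {..<k} - {a}" and c: "odd (card T)"
  shows "Msum g n k a T = 0"
proof -
  have "Msum g n k a T = (\<Sum>xs\<in>profiles n k. \<Prod>b\<in>T. sg g (pref (map (\<lambda>p. rv k \<circ> p) xs) a b))"
    unfolding Msum_def by (rule sum_flip[symmetric])
  also have "\<dots> = (\<Sum>xs\<in>profiles n k. \<Prod>b\<in>T. - sg g (pref xs a b))"
  proof (rule sum.cong[OF refl], rule prod.cong[OF refl])
    fix xs b assume xs: "xs \<in> profiles n k" and b: "b \<in> T"
    have bb: "b < k" "a \<noteq> b" using b T by auto
    show "sg g (pref (map (\<lambda>p. rv k \<circ> p) xs) a b) = - sg g (pref xs a b)"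
      using pref_flip[OF xs a bb] sg_not[OF odd] profiles_length[OF xs] by simp
  qed
  also have "\<dots> = - Msum g n k a T"
    unfolding Msum_def prod_uminus using c by (simp add: sum_negf)
  finally show ?thesis by simp
qed

definition std :: "nat \<Rightarrow> (nat \<Rightarrow> nat) \<Rightarrow> nat \<Rightarrow> nat" where
  "std k p x = (if x < k then card {y. y < k \<and> p y < p x} else x)"

lemma std_less: "x < k \<Longrightarrow> std k p x < k"
proof -
  assume x: "x < k"
  have "{y. y < k \<and> p y < p x} \<subseteq> {..<k} - {x}" by auto
  then have "card {y. y < k \<and> p y < p x} \<le> card ({..<k} - {x})" by (intro card_mono) auto
  also have "\<dots> < k" using x by simp
  finally show ?thesis using x by (simp add: std_def)
qed

lemma std_mono: "x < k \<Longrightarrow> x' < k \<Longrightarrow> p x < p x' \<Longrightarrow> std k p x < std k p x'"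
proof -
  assume x: "x < k" "x' < k" "p x < p x'"
  have "{y. y < k \<and> p y < p x} \<subset> {y. y < k \<and> p y < p x'}" using x by auto
  then have "card {y. y < k \<and> p y < p x} < card {y. y < k \<and> p y < p x'}"
    by (intro psubset_card_mono) auto
  then show ?thesis using x by (simp add: std_def)
qed

lemma std_iff: "inj p \<Longrightarrow> x < k \<Longrightarrow> x' < k \<Longrightarrow> (std k p x < std k p x') = (p x < p x')"
proof -
  assume i: "inj p" and x: "x < k" "x' < k"
  show ?thesis
  proof (cases "p x < p x'")
    case True then show ?thesis using std_mono x by auto
  next
    case False
    then have "p x' < p x \<or> x = x'" using i by (metis injD linorder_neqE_nat)
    then show ?thesis
    proof
      assume "p x' < p x"
      then have "std k p x' < std k p x" using std_mono[OF x(2) x(1)] by blast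
      then show ?thesis using False by simp
    qed (use False in simp)
  qed
qed

lemma std_perm: assumes i: "inj p" shows "std k p permutes {..<k}"
proof (rule bij_imp_permutes)
  have img: "std k p ` {..<k} \<subseteq> {..<k}" using std_less by auto
  have inj: "inj_on (std k p) {..<k}"
  proof (rule inj_onI)
    fix x y assume xy: "x \<in> {..<k}" "y \<in> {..<k}" "std k p x = std k p y"
    show "x = y"
    proof (rule ccontr)
      assume "x \<noteq> y"
      then have "p x < p y \<or> p y < p x" using i by (metis injD linorder_neqE_nat)
      then show False using std_mono[of x k y p] std_mono[of y k x p] xy by auto
    qed
  qed
  show "bij_betw (std k p) {..<k} {..<k}"
    using endo_inj_surj[OF _ img inj] inj unfolding bij_betw_def by auto
  show "\<And>x. x \<notin> {..<k} \<Longrightarrow> std k p x = x" by (simp add: std_def)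
qed

lemma std_comp:
  assumes s: "\<sigma> permutes {..<k}"
  shows "std k (p \<circ> \<sigma>) = std k p \<circ> \<sigma>"
proof
  fix x
  show "std k (p \<circ> \<sigma>) x = (std k p \<circ> \<sigma>) x"
  proof (cases "x < k")
    case True
    have sx: "\<sigma> x < k" using permutes_in_image[OF s] True by auto
    have "\<sigma> ` {y. y < k \<and> p (\<sigma> y) < p (\<sigma> x)} = {z. z < k \<and> p z < p (\<sigma> x)}"
    proof (rule set_eqI, rule iffI)
      fix z assume "z \<in> \<sigma> ` {y. y < k \<and> p (\<sigma> y) < p (\<sigma> x)}"
      then show "z \<in> {z. z < k \<and> p z < p (\<sigma> x)}" using permutes_in_image[OF s] by auto
    next
      fix z assume z: "z \<in> {z. z < k \<and> p z < p (\<sigma> x)}"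
      have "inv \<sigma> z < k" using permutes_in_image[OF permutes_inv[OF s]] z by auto
      moreover have "\<sigma> (inv \<sigma> z) = z" using permutes_inverses[OF s] by simp
      ultimately show "z \<in> \<sigma> ` {y. y < k \<and> p (\<sigma> y) < p (\<sigma> x)}" using z
        by (metis (mono_tags, lifting) image_eqI mem_Collect_eq)
    qed
    then have "card {y. y < k \<and> p (\<sigma> y) < p (\<sigma> x)} = card {z. z < k \<and> p z < p (\<sigma> x)}"
      using card_image[OF inj_on_subset[OF permutes_inj_on[OF s]]] by (metis subset_UNIV)
    then show ?thesis using True sx by (simp add: std_def)
  next
    case False
    then show ?thesis using permutes_not_in[OF s, of x] by (simp add: std_def)
  qed
qed

lemma fiber_le:
  assumes q1: "q1 \<in> linorders k" and q2: "q2 \<in> linorders k"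
  shows "card {p \<in> linorders (Suc k). std k p = q1} \<le> card {p \<in> linorders (Suc k). std k p = q2}"
proof -
  have q1p: "q1 permutes {..<k}" and q2p: "q2 permutes {..<k}" using q1 q2 unfolding linorders_def by auto
  define \<tau> where "\<tau> = inv q1 \<circ> q2"
  have tp: "\<tau> permutes {..<k}" unfolding \<tau>_def by (rule permutes_compose[OF q2p permutes_inv[OF q1p]])
  have tp': "\<tau> permutes {..<Suc k}" by (rule permutes_subset[OF tp]) auto
  have ti: "\<tau> \<circ> inv \<tau> = id" using permutes_inv_o[OF tp] by simp
  show ?thesis
  proof (rule card_inj_on_le[where f = "\<lambda>p. p \<circ> \<tau>"])
    show "inj_on (\<lambda>p. p \<circ> \<tau>) {p \<in> linorders (Suc k). std k p = q1}"
    proof (rule inj_onI)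
      fix p p' assume "p \<circ> \<tau> = p' \<circ> \<tau>"
      then have "p \<circ> \<tau> \<circ> inv \<tau> = p' \<circ> \<tau> \<circ> inv \<tau>" by simp
      then show "p = p'" by (simp add: o_assoc[symmetric] ti)
    qed
    show "(\<lambda>p. p \<circ> \<tau>) ` {p \<in> linorders (Suc k). std k p = q1} \<subseteq> {p \<in> linorders (Suc k). std k p = q2}"
    proof
      fix r assume "r \<in> (\<lambda>p. p \<circ> \<tau>) ` {p \<in> linorders (Suc k). std k p = q1}"
      then obtain p where p: "p permutes {..<Suc k}" "std k p = q1" "r = p \<circ> \<tau>"
        unfolding linorders_def by auto
      have "r permutes {..<Suc k}" using p(3) permutes_compose[OF tp' p(1)] by simp
      moreover have "std k r = q2"
        using p std_comp[OF tp, of p] permutes_inv_o[OF q1p] unfolding \<tau>_def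
        by (simp add: o_assoc)
      ultimately show "r \<in> {p \<in> linorders (Suc k). std k p = q2}" unfolding linorders_def by simp
    qed
    show "finite {p \<in> linorders (Suc k). std k p = q2}" using finite_linorders by simp
  qed
qed

lemma fiber_const:
  "q \<in> linorders k \<Longrightarrow> card {p \<in> linorders (Suc k). std k p = q} = card {p \<in> linorders (Suc k). std k p = id}"
  using fiber_le[of q k id] fiber_le[of id k q] permutes_id[of "{..<k}"] unfolding linorders_def
  by (simp add: antisym)


lemma card_lists_fiber:
  assumes L: "finite L"
  shows "card {xs. length xs = length ys \<and> set xs \<subseteq> L \<and> map f xs = ys}
         = prod_list (map (\<lambda>y. card {p \<in> L. f p = y}) ys)"
proof (induction ys)
  case Nil
  have "{xs. length xs = length [] \<and> set xs \<subseteq> L \<and> map f xs = []} = {[]}" by auto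
  then show ?case by simp
next
  case (Cons y ys)
  let ?A = "{p \<in> L. f p = y}"
  let ?B = "{xs. length xs = length ys \<and> set xs \<subseteq> L \<and> map f xs = ys}"
  have eq: "{xs. length xs = length (y # ys) \<and> set xs \<subseteq> L \<and> map f xs = y # ys}
      = (\<lambda>(p, xs). p # xs) ` (?A \<times> ?B)"
  proof (rule set_eqI, rule iffI)
    fix xs assume "xs \<in> {xs. length xs = length (y # ys) \<and> set xs \<subseteq> L \<and> map f xs = y # ys}"
    then obtain p xs' where "xs = p # xs'" "length xs' = length ys" "set xs' \<subseteq> L" "p \<in> L"
      "f p = y" "map f xs' = ys"
      by (cases xs) auto
    then show "xs \<in> (\<lambda>(p, xs). p # xs) ` (?A \<times> ?B)" by (auto intro!: image_eqI[where x = "(p, xs')"])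
  next
    fix xs assume "xs \<in> (\<lambda>(p, xs). p # xs) ` (?A \<times> ?B)"
    then show "xs \<in> {xs. length xs = length (y # ys) \<and> set xs \<subseteq> L \<and> map f xs = y # ys}" by auto
  qed
  have inj: "inj_on (\<lambda>(p, xs). p # xs) (?A \<times> ?B)" by (auto simp: inj_on_def)
  show ?case unfolding eq card_image[OF inj] card_cartesian_product using Cons by simp
qed

lemma std_in: "p \<in> linorders (Suc k) \<Longrightarrow> std k p \<in> linorders k"
  unfolding linorders_def using std_perm permutes_inj by auto

definition fc :: "nat \<Rightarrow> nat" where
  "fc k = card {p \<in> linorders (Suc k). std k p = id}"

lemma fiber_card:
  assumes ys: "ys \<in> profiles n k"
  shows "card {xs \<in> profiles n (Suc k). map (std k) xs = ys} = fc k ^ n"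
proof -
  have "{xs \<in> profiles n (Suc k). map (std k) xs = ys}
      = {xs. length xs = length ys \<and> set xs \<subseteq> linorders (Suc k) \<and> map (std k) xs = ys}"
    using ys unfolding profiles_def by auto
  then have "card {xs \<in> profiles n (Suc k). map (std k) xs = ys}
      = prod_list (map (\<lambda>y. card {p \<in> linorders (Suc k). std k p = y}) ys)"
    using card_lists_fiber[OF finite_linorders] by simp
  also have "map (\<lambda>y. card {p \<in> linorders (Suc k). std k p = y}) ys = map (\<lambda>y. fc k) ys"
    by (rule map_cong[OF refl]) (use ys fiber_const in \<open>auto simp: profiles_def fc_def\<close>)
  finally show ?thesis using ys by (simp add: map_replicate_const profiles_length)
qed

lemma sum_std:
  "(\<Sum>xs\<in>profiles n (Suc k). (\<Psi> (map (std k) xs) :: real)) = real (fc k) ^ n * (\<Sum>ys\<in>profiles n k. \<Psi> ys)"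
proof -
  have img: "map (std k) ` profiles n (Suc k) \<subseteq> profiles n k"
    by (fastforce simp: profiles_def intro: std_in)
  have "(\<Sum>xs\<in>profiles n (Suc k). \<Psi> (map (std k) xs))
      = (\<Sum>ys\<in>profiles n k. \<Sum>xs\<in>{xs \<in> profiles n (Suc k). map (std k) xs = ys}. \<Psi> (map (std k) xs))"
    using sum.group[OF profiles_finite profiles_finite img, of "\<lambda>xs. \<Psi> (map (std k) xs)"] by simp
  also have "\<dots> = (\<Sum>ys\<in>profiles n k. real (fc k) ^ n * \<Psi> ys)"
  proof (rule sum.cong[OF refl])
    fix ys assume ys: "ys \<in> profiles n k"
    have "(\<Sum>xs\<in>{xs \<in> profiles n (Suc k). map (std k) xs = ys}. \<Psi> (map (std k) xs))
        = (\<Sum>xs\<in>{xs \<in> profiles n (Suc k). map (std k) xs = ys}. \<Psi> ys)"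
      by (rule sum.cong) auto
    also have "\<dots> = real (fc k) ^ n * \<Psi> ys" using fiber_card[OF ys] by simp
    finally show "(\<Sum>xs\<in>{xs \<in> profiles n (Suc k). map (std k) xs = ys}. \<Psi> (map (std k) xs))
        = real (fc k) ^ n * \<Psi> ys" .
  qed
  finally show ?thesis by (simp add: sum_distrib_left)
qed

lemma pref_std:
  assumes xs: "xs \<in> profiles n (Suc k)" and ab: "a < k" "b < k"
  shows "pref (map (std k) xs) a b = pref xs a b"
  unfolding pref_def map_map o_def
proof (rule map_cong[OF refl])
  fix p assume "p \<in> set xs"
  then have "p permutes {..<Suc k}" using profiles_perm xs by blast
  then show "(std k p a < std k p b) = (p a < p b)" using std_iff[OF permutes_inj] ab by blast
qed

lemma M_step:
  assumes a: "a < k" and T: "T \<subseteq> {..<k}"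
  shows "M g n (Suc k) a T = M g n k a T"
proof -
  have "Msum g n (Suc k) a T = (\<Sum>xs\<in>profiles n (Suc k). (\<lambda>ys. \<Prod>b\<in>T. sg g (pref ys a b)) (map (std k) xs))"
    unfolding Msum_def
  proof (rule sum.cong[OF refl], rule prod.cong[OF refl])
    fix xs b assume "xs \<in> profiles n (Suc k)" "b \<in> T"
    then show "sg g (pref xs a b) = sg g (pref (map (std k) xs) a b)" using pref_std a T by auto
  qed
  also have "\<dots> = real (fc k) ^ n * Msum g n k a T" unfolding Msum_def by (rule sum_std)
  finally have 1: "Msum g n (Suc k) a T = real (fc k) ^ n * Msum g n k a T" .
  have 2: "real (card (profiles n (Suc k))) = real (fc k) ^ n * real (card (profiles n k))"
    using sum_std[where \<Psi>="\<lambda>_. 1" and n=n and k=k] by simp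
  have "real (card (profiles n (Suc k))) > 0" using profiles_card_pos by simp
  then have "real (fc k) ^ n \<noteq> 0" unfolding 2 by (metis mult_zero_left less_irrefl)
  then show ?thesis unfolding M_def 1 2 by (rule nonzero_mult_divide_mult_cancel_left)
qed

lemma M_iter: "Suc j \<le> k \<Longrightarrow> M g n k 0 {1..j} = M g n (Suc j) 0 {1..j}"
proof (induction k)
  case 0 then show ?case by simp
next
  case (Suc k)
  show ?case
  proof (cases "Suc j = Suc k")
    case True then show ?thesis by simp
  next
    case False
    then have "Suc j \<le> k" using Suc.prems by simp
    then have "M g n (Suc k) 0 {1..j} = M g n k 0 {1..j}" by (intro M_step) auto
    then show ?thesis using Suc.IH \<open>Suc j \<le> k\<close> by simp
  qed
qed

definition mu :: "(bool list \<Rightarrow> bool) \<Rightarrow> nat \<Rightarrow> nat \<Rightarrow> real" where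
  "mu g n j = M g n (Suc j) 0 {1..j}"

lemma M_mu:
  assumes a: "a < k" and X: "X \<subseteq> {..<k} - {a}"
  shows "M g n k a X = mu g n (card X)"
proof -
  have "card X \<le> card ({..<k} - {a})" using X by (intro card_mono) auto
  then have j: "Suc (card X) \<le> k" using a by simp
  have "M g n k a X = M g n k 0 {1..card X}"
    by (rule M_sym) (use a X j in auto)
  also have "\<dots> = mu g n (card X)" unfolding mu_def by (rule M_iter[OF j])
  finally show ?thesis .
qed

lemma mu_0: "mu g n 0 = 1"
  using profiles_card_pos[of n 1] unfolding mu_def M_def Msum_def by simp

lemma mu_odd: assumes "odd_bool_fun n g" "odd j" shows "mu g n j = 0"
proof -
  have "{1..j} \<subseteq> {..<Suc j} - {0}" by auto
  then have "Msum g n (Suc j) 0 {1..j} = 0" using Msum_odd[OF assms(1), of 0 "Suc j" "{1..j}"] assms(2) by simp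
  then show ?thesis unfolding mu_def M_def by simp
qed



lemma pref_swap:
  assumes xs: "xs \<in> profiles n k" and ab: "a < k" "b < k" "a \<noteq> b"
  shows "pref xs b a = map Not (pref xs a b)"
  unfolding pref_def map_map o_def
proof (rule map_cong[OF refl])
  fix p assume "p \<in> set xs"
  then have p: "p permutes {..<k}" using profiles_perm xs by blast
  have "p a \<noteq> p b" using permutes_inj[OF p] ab(3) by (auto dest: injD)
  then show "(p b < p a) = (\<not> p a < p b)" by auto
qed

lemma card_GCW:
  assumes odd: "odd_bool_fun n g"
  shows "card {xs \<in> profiles n k. has_GCW g k xs}
       = (\<Sum>a<k. card {xs \<in> profiles n k. \<forall>b<k. b \<noteq> a \<longrightarrow> g (pref xs a b)})"
proof -
  let ?W = "\<lambda>a. {xs \<in> profiles n k. \<forall>b<k. b \<noteq> a \<longrightarrow> g (pref xs a b)}"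
  have eq: "{xs \<in> profiles n k. has_GCW g k xs} = (\<Union>a\<in>{..<k}. ?W a)"
    unfolding has_GCW_def by blast
  have disj: "\<forall>a\<in>{..<k}. \<forall>a'\<in>{..<k}. a \<noteq> a' \<longrightarrow> ?W a \<inter> ?W a' = {}"
  proof (intro ballI impI)
    fix a a' assume a: "a \<in> {..<k}" "a' \<in> {..<k}" "a \<noteq> a'"
    show "?W a \<inter> ?W a' = {}"
    proof (rule ccontr)
      assume "?W a \<inter> ?W a' \<noteq> {}"
      then obtain xs where xs1: "xs \<in> ?W a" and xs2: "xs \<in> ?W a'" by blast
      have P: "xs \<in> profiles n k" using xs1 by simp
      have ak: "a < k" "a' < k" using a by auto
      have g1: "g (pref xs a a')" using xs1 ak a(3) by simp
      have g2: "g (pref xs a' a)" using xs2 ak a(3) by simp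
      have sw: "pref xs a' a = map Not (pref xs a a')" using pref_swap[OF P ak a(3)] .
      have len: "length (pref xs a a') = n" using profiles_length[OF P] by simp
      have "g (map Not (pref xs a a')) = (\<not> g (pref xs a a'))"
        using odd len unfolding odd_bool_fun_def by blast
      then show False using g1 g2 sw by simp
    qed
  qed
  have fin: "\<forall>a\<in>{..<k}. finite (?W a)" using profiles_finite by simp
  show ?thesis unfolding eq using card_UN_disjoint[OF finite_lessThan fin disj] by simp
qed

lemma prod_ind: "finite B \<Longrightarrow> (\<Prod>b\<in>B. if P b then 1 else (0::real)) = (if \<forall>b\<in>B. P b then 1 else 0)"
  by (induction B rule: finite_induct) auto

lemma prod_expand:
  fixes s :: "nat \<Rightarrow> real"
  assumes B: "finite B"
  shows "(\<Prod>b\<in>B. s b / 2 + 1 / 2) = (1/2) ^ card B * (\<Sum>X\<in>Pow B. \<Prod>b\<in>X. s b)"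
proof -
  have "(\<Prod>b\<in>B. s b / 2 + 1 / 2) = (\<Sum>X\<in>Pow B. (\<Prod>b\<in>X. s b / 2) * (\<Prod>b\<in>B - X. 1 / 2))"
    by (rule prod_add[OF B])
  also have "\<dots> = (\<Sum>X\<in>Pow B. (1/2) ^ card B * (\<Prod>b\<in>X. s b))"
  proof (rule sum.cong[OF refl])
    fix X assume X: "X \<in> Pow B"
    have fX: "finite X" using X B finite_subset by auto
    have c: "card X + card (B - X) = card B" using X fX B by (simp add: card_Diff_subset card_mono)
    have e1: "(\<Prod>b\<in>X. s b / 2) = (\<Prod>b\<in>X. s b) / 2 ^ card X"
      by (simp add: prod_dividef)
    have e2: "(\<Prod>b\<in>B - X. (1::real) / 2) = 1 / 2 ^ card (B - X)" by (simp add: power_one_over)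
    have "(\<Prod>b\<in>X. s b / 2) * (\<Prod>b\<in>B - X. 1 / 2) = (\<Prod>b\<in>X. s b) / (2 ^ card X * 2 ^ card (B - X))"
      unfolding e1 e2 by simp
    also have "\<dots> = (\<Prod>b\<in>X. s b) / 2 ^ card B"
      unfolding power_add[symmetric] c ..
    finally show "(\<Prod>b\<in>X. s b / 2) * (\<Prod>b\<in>B - X. 1 / 2) = (1/2) ^ card B * (\<Prod>b\<in>X. s b)"
      by (simp add: power_one_over)
  qed
  finally show ?thesis by (simp add: sum_distrib_left)
qed

lemma real_card_W:
  assumes a: "a < k"
  shows "real (card {xs \<in> profiles n k. \<forall>b<k. b \<noteq> a \<longrightarrow> g (pref xs a b)})
       = (1/2) ^ (k - 1) * (\<Sum>X\<in>Pow ({..<k} - {a}). Msum g n k a X)"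
proof -
  let ?B = "{..<k} - {a}"
  have "real (card {xs \<in> profiles n k. \<forall>b<k. b \<noteq> a \<longrightarrow> g (pref xs a b)})
      = (\<Sum>xs\<in>{xs \<in> profiles n k. \<forall>b<k. b \<noteq> a \<longrightarrow> g (pref xs a b)}. 1)" by simp
  also have "\<dots> = (\<Sum>xs\<in>profiles n k. if \<forall>b<k. b \<noteq> a \<longrightarrow> g (pref xs a b) then 1 else 0)"
    by (rule sum.inter_filter[OF profiles_finite])
  also have "\<dots> = (\<Sum>xs\<in>profiles n k. \<Prod>b\<in>?B. sg g (pref xs a b) / 2 + 1 / 2)"
  proof (rule sum.cong[OF refl])
    fix xs
    have "(\<Prod>b\<in>?B. sg g (pref xs a b) / 2 + 1 / 2) = (\<Prod>b\<in>?B. if g (pref xs a b) then 1 else 0)"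
      by (rule prod.cong[OF refl]) (simp add: sg_def)
    also have "\<dots> = (if \<forall>b\<in>?B. g (pref xs a b) then 1 else 0)" by (rule prod_ind) simp
    finally show "(if \<forall>b<k. b \<noteq> a \<longrightarrow> g (pref xs a b) then 1 else 0)
        = (\<Prod>b\<in>?B. sg g (pref xs a b) / 2 + 1 / 2)" by auto
  qed
  also have "\<dots> = (\<Sum>xs\<in>profiles n k. (1/2) ^ (k - 1) * (\<Sum>X\<in>Pow ?B. \<Prod>b\<in>X. sg g (pref xs a b)))"
    by (rule sum.cong[OF refl]) (subst prod_expand, use a in auto)
  also have "\<dots> = (1/2) ^ (k - 1) * (\<Sum>X\<in>Pow ?B. Msum g n k a X)"
    unfolding Msum_def sum_distrib_left[symmetric] by (subst sum.swap) simp
  finally show ?thesis .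
qed

lemma pow_sum_card:
  fixes f :: "nat \<Rightarrow> real"
  assumes B: "finite B"
  shows "(\<Sum>X\<in>Pow B. f (card X)) = (\<Sum>j\<le>card B. real (card B choose j) * f j)"
proof -
  have img: "card ` Pow B \<subseteq> {..card B}" using B by (auto intro: card_mono)
  have "(\<Sum>X\<in>Pow B. f (card X)) = (\<Sum>j\<le>card B. \<Sum>X\<in>{X \<in> Pow B. card X = j}. f (card X))"
    using sum.group[OF finite_Pow_iff[THEN iffD2, OF B] finite_atMost img, of "\<lambda>X. f (card X)"] by simp
  also have "\<dots> = (\<Sum>j\<le>card B. real (card B choose j) * f j)"
  proof (rule sum.cong[OF refl])
    fix j
    have "(\<Sum>X\<in>{X \<in> Pow B. card X = j}. f (card X)) = (\<Sum>X\<in>{X \<in> Pow B. card X = j}. f j)"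
      by (rule sum.cong) auto
    also have "{X \<in> Pow B. card X = j} = {X. X \<subseteq> B \<and> card X = j}" by auto
    finally show "(\<Sum>X\<in>{X \<in> Pow B. card X = j}. f (card X)) = real (card B choose j) * f j"
      using n_subsets[OF B, of j] by simp
  qed
  finally show ?thesis .
qed

lemma GCW_formula:
  assumes odd: "odd_bool_fun n g" and k: "0 < k"
  shows "GCW g n k = real k * (1/2) ^ (k - 1) * (\<Sum>j\<le>k-1. real (k - 1 choose j) * mu g n j)"
proof -
  let ?P = "real (card (profiles n k))"
  have P: "?P > 0" using profiles_card_pos by simp
  have "GCW g n k = (\<Sum>a<k. real (card {xs \<in> profiles n k. \<forall>b<k. b \<noteq> a \<longrightarrow> g (pref xs a b)})) / ?P"
    unfolding GCW_def card_GCW[OF odd] by simp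
  also have "\<dots> = (\<Sum>a<k. (1/2) ^ (k - 1) * (\<Sum>X\<in>Pow ({..<k} - {a}). Msum g n k a X) / ?P)"
    unfolding sum_divide_distrib by (rule sum.cong[OF refl]) (simp add: real_card_W)
  also have "\<dots> = (\<Sum>a<k. (1/2) ^ (k - 1) * (\<Sum>j\<le>k-1. real (k - 1 choose j) * mu g n j))"
  proof (rule sum.cong[OF refl])
    fix a assume a: "a \<in> {..<k}"
    have "(\<Sum>X\<in>Pow ({..<k} - {a}). Msum g n k a X) / ?P = (\<Sum>X\<in>Pow ({..<k} - {a}). M g n k a X)"
      unfolding M_def sum_divide_distrib by simp
    also have "\<dots> = (\<Sum>X\<in>Pow ({..<k} - {a}). mu g n (card X))"
      by (rule sum.cong[OF refl]) (use a M_mu in auto)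
    also have "\<dots> = (\<Sum>j\<le>k-1. real (k - 1 choose j) * mu g n j)"
      using pow_sum_card[of "{..<k} - {a}" "mu g n"] a by simp
    finally show "(1/2) ^ (k - 1) * (\<Sum>X\<in>Pow ({..<k} - {a}). Msum g n k a X) / ?P
        = (1/2) ^ (k - 1) * (\<Sum>j\<le>k-1. real (k - 1 choose j) * mu g n j)"
      by (metis times_divide_eq_right)
  qed
  also have "\<dots> = real k * (1/2) ^ (k - 1) * (\<Sum>j\<le>k-1. real (k - 1 choose j) * mu g n j)"
    by simp
  finally show ?thesis .
qed

lemma sum2: "(\<Sum>j\<le>(2::nat). real (2 choose j) * f j) = f 0 + 2 * f 1 + f 2"
  by (simp add: eval_nat_numeral atMost_Suc binomial_Suc_Suc)
lemma sum3: "(\<Sum>j\<le>(3::nat). real (3 choose j) * f j) = f 0 + 3 * f 1 + 3 * f 2 + f 3"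
  by (simp add: eval_nat_numeral atMost_Suc binomial_Suc_Suc)
lemma sum4: "(\<Sum>j\<le>(4::nat). real (4 choose j) * f j) = f 0 + 4 * f 1 + 6 * f 2 + 4 * f 3 + f 4"
  by (simp add: eval_nat_numeral atMost_Suc binomial_Suc_Suc)
lemma sum5: "(\<Sum>j\<le>(5::nat). real (5 choose j) * f j) = f 0 + 5 * f 1 + 10 * f 2 + 10 * f 3 + 5 * f 4 + f 5"
  by (simp add: eval_nat_numeral atMost_Suc binomial_Suc_Suc)

theorem mainTheorem9:
  fixes g :: "bool list \<Rightarrow> bool" and n :: nat
  assumes "odd_bool_fun n g"
  shows "GCW g n 4 = 2 * GCW g n 3 - 1 \<and>
         GCW g n 5 = GCW g n 6 / 3 + 5 * GCW g n 3 / 3 - 1"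
proof -
  note F = GCW_formula[OF assms]
  have m0: "mu g n 0 = 1" by (rule mu_0)
  have m1: "mu g n 1 = 0" "mu g n 3 = 0" "mu g n 5 = 0" using mu_odd[OF assms] by auto
  have g3: "GCW g n 3 = 3 / 4 * (1 + mu g n 2)"
    using F[of 3] sum2[of "mu g n"] m0 m1 by (simp add: eval_nat_numeral field_simps)
  have g4: "GCW g n 4 = 1 / 2 * (1 + 3 * mu g n 2)"
    using F[of 4] sum3[of "mu g n"] m0 m1 by (simp add: eval_nat_numeral field_simps)
  have g5: "GCW g n 5 = 5 / 16 * (1 + 6 * mu g n 2 + mu g n 4)"
    using F[of 5] sum4[of "mu g n"] m0 m1 by (simp add: eval_nat_numeral field_simps)
  have g6: "GCW g n 6 = 3 / 16 * (1 + 10 * mu g n 2 + 5 * mu g n 4)"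
    using F[of 6] sum5[of "mu g n"] m0 m1 by (simp add: eval_nat_numeral field_simps)
  show ?thesis unfolding g3 g4 g5 g6 by (simp add: field_simps)
qed

end
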